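(* Let $H$ be a Hilbert space, $(Y,\|\cdot\|_Y)$ a Banach space, $f:H\to Y$ locally Lipschitz, and $K\subset H$ compact. Then there exist $n_0\in\mathbb{N}$ and a constant $c(f,K)\ge0$ such that for every $n\ge n_0$ there is an $n$-dimensional linear subspace $E_n\subset H$ with $$\sup_{x\in K}\|f(x)-f(\pi_{E_n}(x))\|_Y\le c(f,K)\,\Omega_n(K,H),$$ where $\pi_{E_n}$ is the orthogonal projection onto $E_n$.
   Context: The Kolmogorov $n$-width is $\Omega_n(K,H)=\inf_{\dim E=n}\sup_{u\in K}\inf_{v\in E}\|u-v\|$, the infimum over $n$-dimensional linear subspaces $E\subset H$. *)

theory Defs
  imports "HOL-Analysis.Analysis"
begin

definition n_dim_subspace :: "'a::real_vector set \<Rightarrow> nat \<Rightarrow> bool" where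
  "n_dim_subspace E n \<longleftrightarrow> subspace E \<and>
     (\<exists>B. finite B \<and> independent B \<and> card B = n \<and> span B = E)"

definition orth_proj :: "'a::real_inner set \<Rightarrow> 'a \<Rightarrow> 'a" where
  "orth_proj E x = (THE y. y \<in> E \<and> (\<forall>e\<in>E. inner (x - y) e = 0))"

text \<open>Kolmogorov n-width of K in H (here H is the whole ambient type).\<close>
definition kolmogorov_width :: "nat \<Rightarrow> 'a::real_normed_vector set \<Rightarrow> real" where
  "kolmogorov_width n K =
     (INF E \<in> {E. n_dim_subspace E n}. (SUP u \<in> K. infdist u E))"

definition locally_lipschitz :: "('a::metric_space \<Rightarrow> 'b::metric_space) \<Rightarrow> bool" where
  "locally_lipschitz f \<longleftrightarrow>
     (\<forall>x. \<exists>r>0. \<exists>L. \<forall>y\<in>ball x r. \<forall>z\<in>ball x r. dist (f y) (f z) \<le> L * dist y z)"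

end

theory Submission
  imports Defs
begin

lemma gs_orth:
  fixes U :: "'a::real_inner set"
  assumes U: "finite U" "pairwise orthogonal U" "0 \<notin> U" and that: "c \<in> U"
  shows "(a - (\<Sum>b\<in>U. (b \<bullet> a / (b \<bullet> b)) *\<^sub>R b)) \<bullet> c = 0"
proof -
    have "(\<Sum>b\<in>U. (b \<bullet> a / (b \<bullet> b)) *\<^sub>R b) \<bullet> c = (\<Sum>b\<in>U. (b \<bullet> a / (b \<bullet> b)) * (b \<bullet> c))"
      by (simp add: inner_sum_left)
    also have "\<dots> = (\<Sum>b\<in>U. if b = c then c \<bullet> a else 0)"
    proof (rule sum.cong[OF refl])
      fix b assume "b \<in> U"
      show "(b \<bullet> a / (b \<bullet> b)) * (b \<bullet> c) = (if b = c then c \<bullet> a else 0)"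
        using U(2,3) \<open>b \<in> U\<close> that by (auto simp: pairwise_def orthogonal_def)
    qed
    also have "\<dots> = c \<bullet> a" using U(1) that by simp
    finally have eq: "(\<Sum>b\<in>U. (b \<bullet> a / (b \<bullet> b)) *\<^sub>R b) \<bullet> c = c \<bullet> a" .
    have "(a - (\<Sum>b\<in>U. (b \<bullet> a / (b \<bullet> b)) *\<^sub>R b)) \<bullet> c = a \<bullet> c - (\<Sum>b\<in>U. (b \<bullet> a / (b \<bullet> b)) *\<^sub>R b) \<bullet> c"
      by (simp add: inner_diff_left)
    then show ?thesis using eq inner_commute[of c a] by simp
qed

lemma gs_exists:
  fixes T :: "'a::real_inner set"
  assumes "finite T"
  shows "\<exists>U. finite U \<and> pairwise orthogonal U \<and> 0 \<notin> U \<and> span U = span T"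
  using assms
proof (induction T rule: finite_induct)
  case empty
  then show ?case by (intro exI[of _ "{}"]) auto
next
  case (insert a T)
  then obtain U where U: "finite U" "pairwise orthogonal U" "0 \<notin> U" "span U = span T" by blast
  define a' where "a' = a - (\<Sum>b\<in>U. (b \<bullet> a / (b \<bullet> b)) *\<^sub>R b)"
  have orth: "a' \<bullet> c = 0" if "c \<in> U" for c
    unfolding a'_def using gs_orth[OF U(1-3) that] .
  have sub: "a - a' \<in> span U"
    by (simp add: a'_def span_sum span_mul span_base)
  show ?case
  proof (cases "a' = 0")
    case True
    then have "a \<in> span U" using sub by simp
    then have "span (insert a T) = span U"
      using U(4) by (simp add: span_redundant)
    then show ?thesis using U by blast
  next
    case False
    have "span (insert a' U) = span (insert a U)"
      using sub by (metis eq_span_insert_eq)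
    also have "\<dots> = span (insert a T)"
      using U(4) by (simp add: span_insert)
    finally have "span (insert a' U) = span (insert a T)" .
    moreover have "pairwise orthogonal (insert a' U)"
      using U(2) orth by (auto simp: pairwise_insert orthogonal_def inner_commute)
    ultimately show ?thesis using U False by (intro exI[of _ "insert a' U"]) auto
  qed
qed

lemma proj_props:
  fixes B :: "'a::real_inner set"
  assumes "finite B"
  shows "orth_proj (span B) x \<in> span B \<and> (\<forall>e\<in>span B. inner (x - orth_proj (span B) x) e = 0)"
proof -
  obtain U where U: "finite U" "pairwise orthogonal U" "0 \<notin> U" "span U = span B"
    using gs_exists[OF assms] by blast
  define p where "p = (\<Sum>b\<in>U. (b \<bullet> x / (b \<bullet> b)) *\<^sub>R b)"
  have pin: "p \<in> span B" unfolding p_def U(4)[symmetric]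
    by (simp add: span_sum span_mul span_base)
  have porth: "\<forall>e\<in>span B. inner (x - p) e = 0"
  proof
    fix e assume "e \<in> span B"
    then have "e \<in> span U" using U(4) by simp
    moreover have "\<And>c. c \<in> U \<Longrightarrow> orthogonal (x - p) c"
      unfolding p_def orthogonal_def using gs_orth[OF U(1-3)] by blast
    ultimately have "orthogonal (x - p) e" by (rule orthogonal_to_span)
    then show "inner (x - p) e = 0" by (simp add: orthogonal_def)
  qed
  have uniq: "y = p" if "y \<in> span B" "\<forall>e\<in>span B. inner (x - y) e = 0" for y
  proof -
    have d: "y - p \<in> span B" using that(1) pin by (simp add: span_diff)
    have "inner (x - y) (y - p) = 0" "inner (x - p) (y - p) = 0" using that(2) porth d by auto
    then have "inner (y - p) (y - p) = 0"
      by (metis (no_types, lifting) diff_diff_eq2 diff_self inner_diff_left inner_commute diff_zero)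
    then show ?thesis by simp
  qed
  have "orth_proj (span B) x = p"
    unfolding orth_proj_def
    using pin porth uniq by (intro the_equality) blast+
  then show ?thesis using pin porth by simp
qed

lemma proj_dist:
  fixes B :: "'a::real_inner set"
  assumes "finite B" "e \<in> span B"
  shows "norm (x - orth_proj (span B) x) \<le> norm (x - e)"
proof -
  define y where "y = orth_proj (span B) x"
  have y: "y \<in> span B" "\<forall>e\<in>span B. inner (x - y) e = 0"
    using proj_props[OF assms(1), of x] unfolding y_def by auto
  have "y - e \<in> span B" using y(1) assms(2) by (simp add: span_diff)
  then have "orthogonal (x - y) (y - e)" using y(2) by (simp add: orthogonal_def)
  then have "(norm ((x - y) + (y - e)))\<^sup>2 = (norm (x - y))\<^sup>2 + (norm (y - e))\<^sup>2"
    by (rule norm_add_Pythagorean)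
  then have "(norm (x - y))\<^sup>2 \<le> (norm (x - e))\<^sup>2" by simp
  then have "norm (x - y) \<le> norm (x - e)" by (rule power2_le_imp_le) simp
  then show ?thesis unfolding y_def .
qed

lemma proj_infdist:
  fixes B :: "'a::real_inner set"
  assumes "finite B"
  shows "infdist x (span B) = norm (x - orth_proj (span B) x)"
proof (rule antisym)
  have "orth_proj (span B) x \<in> span B" using proj_props[OF assms] by blast
  then show "infdist x (span B) \<le> norm (x - orth_proj (span B) x)"
    using infdist_le[of "orth_proj (span B) x" "span B" x] by (simp add: dist_norm)
  have ne: "span B \<noteq> {}" using span_zero by blast
  show "norm (x - orth_proj (span B) x) \<le> infdist x (span B)"
    unfolding infdist_notempty[OF ne]
    by (rule cINF_greatest[OF ne]) (simp add: dist_norm proj_dist[OF assms])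
qed

lemma proj_id:
  fixes B :: "'a::real_inner set"
  assumes "finite B" "x \<in> span B"
  shows "orth_proj (span B) x = x"
  using proj_dist[OF assms, of x] by simp

lemma ndim_span:
  assumes "n_dim_subspace E n"
  obtains B where "finite B" "independent B" "card B = n" "E = span B"
  using assms unfolding n_dim_subspace_def by metis

lemma extend_ndim:
  fixes B E0 :: "'a::real_vector set"
  assumes "finite B" "independent B" "card B \<le> n" "n_dim_subspace E0 n"
  shows "\<exists>E. n_dim_subspace E n \<and> B \<subseteq> E"
proof -
  obtain B0 where B0: "finite B0" "independent B0" "card B0 = n" "E0 = span B0"
    using ndim_span[OF assms(4)] by metis
  obtain B' where B': "B \<subseteq> B'" "B' \<subseteq> B \<union> B0" "independent B'" "B \<union> B0 \<subseteq> span B'"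
    using maximal_independent_subset_extend[of B "B \<union> B0"] assms(2) by blast
  have fB': "finite B'" using B'(2) assms(1) B0(1) finite_subset by blast
  have "card B0 \<le> card B'"
    using independent_span_bound[OF fB' B0(2)] B'(4) by blast
  then have "n - card B \<le> card (B' - B)"
    using B0(3) B'(1) fB' by (simp add: card_Diff_subset finite_subset)
  then obtain C where C: "C \<subseteq> B' - B" "card C = n - card B"
    by (meson obtain_subset_with_card_n)
  have fC: "finite C" using C(1) fB' finite_subset by blast
  have card: "card (B \<union> C) = n"
    using C assms(1,3) fC by (subst card_Un_disjoint) auto
  have ind: "independent (B \<union> C)"
    using B'(1,3) C(1) by (meson Diff_subset Un_least dual_order.trans independent_mono)
  show ?thesis
    apply (rule exI[of _ "span (B \<union> C)"])
    unfolding n_dim_subspace_def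
    using card ind fC assms(1) by (auto simp: span_base subspace_span intro!: exI[of _ "B \<union> C"])
qed

lemma max_indep_finite:
  fixes V :: "'a::real_vector set"
  assumes A: "\<forall>S\<subseteq>V. finite S \<and> independent S \<longrightarrow> card S \<le> n"
  obtains B where "B \<subseteq> V" "finite B" "independent B" "card B \<le> n" "V \<subseteq> span B"
proof -
  have e1: "{} \<subseteq> V" by simp
  have e2: "independent ({}::'a set)" by (rule independent_empty)
  obtain B where B: "B \<subseteq> V" "independent B" "V \<subseteq> span B"
    by (rule maximal_independent_subset_extend[OF e1 e2])
  have "finite B"
  proof (rule ccontr)
    assume "infinite B"
    then obtain S where S: "S \<subseteq> B" "finite S" "card S = Suc n"
      using infinite_arbitrarily_large[OF \<open>infinite B\<close>, of "Suc n"] by (elim exE conjE) simp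
    have "independent S" using B(2) S(1) by (rule independent_mono)
    moreover have "S \<subseteq> V" using S(1) B(1) by blast
    ultimately have "card S \<le> n" using A S(2) by simp
    then show False using S(3) by simp
  qed
  moreover have "card B \<le> n" using A B(1,2) \<open>finite B\<close> by simp
  ultimately show ?thesis using that B(1,2,3) by simp
qed

lemma dep_coeffs:
  fixes e :: "'b \<Rightarrow> 'a::real_vector"
  assumes S: "finite S" and B: "finite B" "card B < card S" and sub: "e ` S \<subseteq> span B"
  shows "\<exists>a. (\<Sum>v\<in>S. a v *\<^sub>R e v) = 0 \<and> (\<exists>v\<in>S. a v \<noteq> 0)"
proof (cases "inj_on e S")
  case True
  have "dependent (e ` S)"
  proof (rule ccontr)
    assume "independent (e ` S)"
    from independent_span_bound[OF B(1) this sub] have "card (e ` S) \<le> card B" by simp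
    with card_image[OF True] B(2) show False by simp
  qed
  then obtain T u where T: "finite T" "T \<subseteq> e ` S" "(\<Sum>w\<in>T. u w *\<^sub>R w) = 0" "\<exists>w\<in>T. u w \<noteq> 0"
    unfolding dependent_explicit by blast
  define a where "a v = (if e v \<in> T then u (e v) else 0)" for v
  have "(\<Sum>w\<in>e ` S. (if w \<in> T then u w else 0) *\<^sub>R w) = (\<Sum>v\<in>S. a v *\<^sub>R e v)"
    unfolding sum.reindex[OF True] a_def o_def by (rule refl)
  moreover have "(\<Sum>w\<in>e ` S. (if w \<in> T then u w else 0) *\<^sub>R w) = (\<Sum>w\<in>e ` S. if w \<in> T then u w *\<^sub>R w else 0)"
    by (rule sum.cong) auto
  moreover have "(\<Sum>w\<in>e ` S. if w \<in> T then u w *\<^sub>R w else 0) = (\<Sum>w\<in>e ` S \<inter> T. u w *\<^sub>R w)"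
    using S by (simp only: sum.inter_restrict finite_imageI)
  moreover have "e ` S \<inter> T = T" using T(2) by blast
  ultimately have "(\<Sum>v\<in>S. a v *\<^sub>R e v) = 0" using T(3) by simp
  moreover obtain w where w: "w \<in> T" "u w \<noteq> 0" using T(4) by blast
  moreover obtain v where "v \<in> S" "w = e v" using w(1) T(2) by blast
  ultimately show ?thesis using a_def by (intro exI[of _ a]) auto
next
  case False
  then obtain v w where vw: "v \<in> S" "w \<in> S" "v \<noteq> w" "e v = e w" unfolding inj_on_def by blast
  define a where "a x = (if x = v then 1 else if x = w then -1 else (0::real))" for x
  have "(\<Sum>x\<in>S. a x *\<^sub>R e x) = (\<Sum>x\<in>S. (if x = v then e v else 0) + (if x = w then - e w else 0))"
    using vw(3) by (intro sum.cong) (auto simp: a_def)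
  also have "\<dots> = e v - e w"
    using S vw(1,2) by (simp add: sum.distrib)
  finally have "(\<Sum>x\<in>S. a x *\<^sub>R e x) = 0" using vw(4) by simp
  then show ?thesis using vw a_def by (intro exI[of _ a]) auto
qed

lemma bdd_infdist:
  fixes K :: "'a::metric_space set"
  assumes "compact K"
  shows "bdd_above ((\<lambda>u. infdist u E) ` K)"
proof -
  have "compact ((\<lambda>u. infdist u E) ` K)"
    by (rule compact_continuous_image[OF _ assms]) (intro continuous_intros)
  then show ?thesis by (simp add: bounded_imp_bdd_above compact_imp_bounded)
qed

lemma sup_nonneg:
  fixes K :: "'a::metric_space set"
  assumes "compact K" "K \<noteq> {}"
  shows "0 \<le> (SUP u\<in>K. infdist u E)"
proof -
  obtain k where "k \<in> K" using assms by blast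
  then have "infdist k E \<le> (SUP u\<in>K. infdist u E)"
    using bdd_infdist[OF assms(1)] by (rule cSUP_upper)
  then show ?thesis using infdist_nonneg[of k E] by linarith
qed

lemma width_le:
  fixes K :: "'a::real_normed_vector set"
  assumes "compact K" "K \<noteq> {}" "n_dim_subspace E n"
  shows "kolmogorov_width n K \<le> (SUP u\<in>K. infdist u E)"
proof -
  have bb: "bdd_below ((\<lambda>E. SUP u\<in>K. infdist u E) ` {E. n_dim_subspace E n})"
    by (rule bdd_belowI2[where m=0]) (simp add: sup_nonneg assms(1,2))
  show ?thesis unfolding kolmogorov_width_def
    by (rule cINF_lower[OF bb]) (simp add: assms(3))
qed

lemma width_nonneg:
  fixes K E :: "'a::real_normed_vector set"
  assumes "compact K" "K \<noteq> {}" "n_dim_subspace E n"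
  shows "0 \<le> kolmogorov_width n K"
proof -
  have ne: "{E::'a set. n_dim_subspace E n} \<noteq> {}" using assms(3) by blast
  show ?thesis unfolding kolmogorov_width_def
    by (rule cINF_greatest[OF ne]) (rule sup_nonneg[OF assms(1,2)])
qed

lemma width_less:
  fixes K E0 :: "'a::real_normed_vector set"
  assumes "n_dim_subspace E0 n" "kolmogorov_width n K < z"
  shows "\<exists>E. n_dim_subspace E n \<and> (SUP u\<in>K. infdist u E) < z"
proof -
  have "(\<lambda>E. SUP u\<in>K. infdist u E) ` {E. n_dim_subspace E n} \<noteq> {}" using assms(1) by blast
  from cInf_lessD[OF this] assms(2) obtain E where "n_dim_subspace E n" "(SUP u\<in>K. infdist u E) < z"
    unfolding kolmogorov_width_def by blast
  then show ?thesis by blast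
qed

lemma width_zero_dim:
  fixes K E0 :: "'a::real_inner set"
  assumes K: "compact K" and w: "kolmogorov_width n K = 0" and E0: "n_dim_subspace E0 n"
  shows "\<forall>S\<subseteq>K. finite S \<and> independent S \<longrightarrow> card S \<le> n"
proof (intro allI impI, elim conjE, rule ccontr)
  fix S assume S: "S \<subseteq> K" "finite S" "independent S" "\<not> card S \<le> n"
  define N where "N = card S"
  have Npos: "n < N" using S(4) N_def by simp
  have Sne: "S \<noteq> {}" using Npos N_def by auto
  define d where "d v = infdist v (span (S - {v}))" for v
  have dpos: "d v > 0" if "v \<in> S" for v
  proof -
    have fin: "finite (S - {v})" using S(2) by simp
    have nv: "v \<notin> span (S - {v})" using S(3) that unfolding dependent_def by blast
    have "d v = norm (v - orth_proj (span (S - {v})) v)" unfolding d_def by (rule proj_infdist[OF fin])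
    moreover have "orth_proj (span (S - {v})) v \<in> span (S - {v})" using proj_props[OF fin] by blast
    then have "v - orth_proj (span (S - {v})) v \<noteq> 0" using nv by auto
    ultimately show ?thesis by simp
  qed
  define m where "m = Min (d ` S)"
  have mpos: "m > 0" unfolding m_def using dpos S(2) Sne by (simp add: Min_gr_iff)
  have mle: "m \<le> d v" if "v \<in> S" for v unfolding m_def using S(2) that by (intro Min_le) auto
  define \<epsilon> where "\<epsilon> = m / (2 * real N)"
  have epos: "\<epsilon> > 0" unfolding \<epsilon>_def using mpos Npos by simp
  obtain E where E: "n_dim_subspace E n" "(SUP u\<in>K. infdist u E) < \<epsilon>"
    using width_less[OF E0, of K \<epsilon>] w epos by auto
  obtain BE where BE: "finite BE" "independent BE" "card BE = n" "E = span BE"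
    by (rule ndim_span[OF E(1)])
  define e where "e v = orth_proj E v" for v
  have close: "norm (v - e v) < \<epsilon>" if "v \<in> S" for v
  proof -
    have vK: "v \<in> K" using S(1) that by blast
    have "infdist v E \<le> (SUP u\<in>K. infdist u E)" by (rule cSUP_upper[OF vK bdd_infdist[OF K]])
    moreover have "infdist v E = norm (v - e v)" unfolding e_def BE(4) by (rule proj_infdist[OF BE(1)])
    ultimately show ?thesis using E(2) by linarith
  qed
  have esub: "e ` S \<subseteq> span BE" using proj_props[OF BE(1)] unfolding e_def BE(4) by blast
  have cardlt: "card BE < card S" using BE(3) Npos N_def by simp
  obtain a where a: "(\<Sum>v\<in>S. a v *\<^sub>R e v) = 0" "\<exists>v\<in>S. a v \<noteq> 0"
    using dep_coeffs[OF S(2) BE(1) cardlt esub] by blast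
  define M where "M = Max ((\<lambda>v. \<bar>a v\<bar>) ` S)"
  have Mge: "\<bar>a v\<bar> \<le> M" if "v \<in> S" for v unfolding M_def using S(2) that by (intro Max_ge) auto
  have "M \<in> (\<lambda>v. \<bar>a v\<bar>) ` S" unfolding M_def using S(2) Sne by (intro Max_in) auto
  then obtain v0 where v0: "v0 \<in> S" "\<bar>a v0\<bar> = M" by blast
  have Mpos: "M > 0"
  proof -
    obtain v where "v \<in> S" "a v \<noteq> 0" using a(2) by blast
    then show ?thesis using Mge[of v] by simp
  qed
  have upper: "norm (\<Sum>v\<in>S. a v *\<^sub>R v) \<le> real N * (M * \<epsilon>)"
  proof -
    have "(\<Sum>v\<in>S. a v *\<^sub>R (v - e v)) = (\<Sum>v\<in>S. a v *\<^sub>R v) - (\<Sum>v\<in>S. a v *\<^sub>R e v)"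
      by (simp add: scaleR_diff_right sum_subtractf)
    then have "(\<Sum>v\<in>S. a v *\<^sub>R v) = (\<Sum>v\<in>S. a v *\<^sub>R (v - e v))" using a(1) by simp
    also have "norm \<dots> \<le> (\<Sum>v\<in>S. norm (a v *\<^sub>R (v - e v)))" by (rule norm_sum)
    also have "\<dots> \<le> (\<Sum>v\<in>S. M * \<epsilon>)"
    proof (rule sum_mono)
      fix v assume v: "v \<in> S"
      have "\<bar>a v\<bar> * norm (v - e v) \<le> M * \<epsilon>"
        using Mge[OF v] close[OF v] Mpos by (intro mult_mono) auto
      then show "norm (a v *\<^sub>R (v - e v)) \<le> M * \<epsilon>" by simp
    qed
    also have "\<dots> = real N * (M * \<epsilon>)" by (simp add: N_def)
    finally show ?thesis .
  qed
  have lower: "M * m \<le> norm (\<Sum>v\<in>S. a v *\<^sub>R v)"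
  proof -
    define w' where "w' = (\<Sum>v\<in>S - {v0}. a v *\<^sub>R v)"
    have w'in: "w' \<in> span (S - {v0})" unfolding w'_def
      by (intro span_sum span_scale span_base) auto
    have a0: "a v0 \<noteq> 0" using v0 Mpos by auto
    define w where "w = (- 1 / a v0) *\<^sub>R w'"
    have win: "w \<in> span (S - {v0})" unfolding w_def by (rule span_scale[OF w'in])
    have "(\<Sum>v\<in>S. a v *\<^sub>R v) = a v0 *\<^sub>R v0 + w'" unfolding w'_def using S(2) v0(1) by (simp add: sum.remove)
    also have "\<dots> = a v0 *\<^sub>R (v0 - w)" using a0 by (simp add: w_def scaleR_diff_right scaleR_add_right)
    finally have eq: "(\<Sum>v\<in>S. a v *\<^sub>R v) = a v0 *\<^sub>R (v0 - w)" .
    have "m \<le> d v0" by (rule mle[OF v0(1)])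
    also have "d v0 \<le> dist v0 w" unfolding d_def by (rule infdist_le[OF win])
    also have "\<dots> = norm (v0 - w)" by (simp add: dist_norm)
    finally have "m \<le> norm (v0 - w)" .
    then have "M * m \<le> M * norm (v0 - w)" using Mpos by simp
    also have "\<dots> = norm (\<Sum>v\<in>S. a v *\<^sub>R v)" using eq v0(2) by simp
    finally show ?thesis .
  qed
  have "real N * (M * \<epsilon>) = M * m / 2" using Npos unfolding \<epsilon>_def by (simp add: field_simps)
  moreover have "M * m > 0" using Mpos mpos by simp
  ultimately show False using upper lower by linarith
qed

lemma unif_lip:
  fixes f :: "'a::metric_space \<Rightarrow> 'b::metric_space"
  assumes "locally_lipschitz f" "compact K" "K \<noteq> {}"
  obtains \<delta> L where "\<delta> > 0" "L \<ge> 0" "\<And>x y. x \<in> K \<Longrightarrow> dist x y < \<delta> \<Longrightarrow> dist (f x) (f y) \<le> L * dist x y"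
proof -
  have "\<forall>x. \<exists>r. r > 0 \<and> (\<exists>L. \<forall>y\<in>ball x r. \<forall>z\<in>ball x r. dist (f y) (f z) \<le> L * dist y z)"
    using assms(1) unfolding locally_lipschitz_def by blast
  then obtain r where r: "\<forall>x. r x > 0 \<and> (\<exists>L. \<forall>y\<in>ball x (r x). \<forall>z\<in>ball x (r x). dist (f y) (f z) \<le> L * dist y z)"
    by (rule choice[THEN exE])
  then have "\<forall>x. \<exists>L. \<forall>y\<in>ball x (r x). \<forall>z\<in>ball x (r x). dist (f y) (f z) \<le> L * dist y z" by blast
  then obtain Lc where Lc: "\<forall>x. \<forall>y\<in>ball x (r x). \<forall>z\<in>ball x (r x). dist (f y) (f z) \<le> Lc x * dist y z"
    by (rule choice[THEN exE])
  have cov: "K \<subseteq> (\<Union>x\<in>K. ball x (r x / 2))" using r by force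
  obtain C where C: "C \<subseteq> K" "finite C" "K \<subseteq> (\<Union>c\<in>C. ball c (r c / 2))"
    by (rule compactE_image[OF assms(2) _ cov]) auto
  have Cne: "C \<noteq> {}" using C(3) assms(3) by auto
  define \<delta> where "\<delta> = Min ((\<lambda>c. r c / 2) ` C)"
  define L where "L = Max ((\<lambda>c. \<bar>Lc c\<bar>) ` C)"
  have dpos: "\<delta> > 0" unfolding \<delta>_def using C(2) Cne r by (simp add: Min_gr_iff)
  have dle: "\<delta> \<le> r c / 2" if "c \<in> C" for c unfolding \<delta>_def using C(2) that by (intro Min_le) auto
  have Lge: "\<bar>Lc c\<bar> \<le> L" if "c \<in> C" for c unfolding L_def using C(2) that by (intro Max_ge) auto
  obtain c0 where "c0 \<in> C" using Cne by blast
  then have L0: "L \<ge> 0" using Lge[of c0] by linarith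
  show ?thesis
  proof (rule that[OF dpos L0])
    fix x y assume x: "x \<in> K" and xy: "dist x y < \<delta>"
    obtain c where c: "c \<in> C" "dist c x < r c / 2" using C(3) x by auto
    have "dist c y \<le> dist c x + dist x y" by (rule dist_triangle)
    then have yb: "y \<in> ball c (r c)" using c dle[OF c(1)] xy by simp
    have "dist c x < r c" using c(2) zero_le_dist[of c x] by linarith
    then have xb: "x \<in> ball c (r c)" by simp
    have "dist (f x) (f y) \<le> Lc c * dist x y" using Lc xb yb by blast
    also have "\<dots> \<le> L * dist x y"
      using Lge[OF c(1)] by (intro mult_right_mono) auto
    finally show "dist (f x) (f y) \<le> L * dist x y" .
  qed
qed

theorem lemma4p8:
  fixes f :: "'a::{real_inner, complete_space} \<Rightarrow> 'b::banach"
    and K :: "'a set"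
  assumes "locally_lipschitz f"
    and "compact K"
  shows "\<exists>n0::nat. \<exists>c::real. c \<ge> 0 \<and>
           (\<forall>n\<ge>n0. (\<exists>E::'a set. n_dim_subspace E n) \<longrightarrow>
              (\<exists>E. n_dim_subspace E n \<and>
                 (SUP x \<in> K. norm (f x - f (orth_proj E x))) \<le> c * kolmogorov_width n K))"
proof (cases "K = {}")
  case True
  show ?thesis
  proof (intro exI[of _ "0::nat"] exI[of _ "1::real"] conjI allI impI)
    show "0 \<le> (1::real)" by simp
    fix n :: nat assume "0 \<le> n" and ex: "\<exists>E::'a set. n_dim_subspace E n"
    then obtain E0 :: "'a set" where E0: "n_dim_subspace E0 n" by blast
    have ne: "{E::'a set. n_dim_subspace E n} \<noteq> {}" using E0 by blast
    have "kolmogorov_width n K = Sup {}"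
      unfolding kolmogorov_width_def using True ne by (simp add: cINF_const)
    then show "\<exists>E. n_dim_subspace E n \<and> (SUP x\<in>K. norm (f x - f (orth_proj E x))) \<le> 1 * kolmogorov_width n K"
      using E0 True by auto
  qed
next
  case False
  note Kne = False
  obtain \<delta> L where dpos: "\<delta> > 0" and L0: "L \<ge> 0"
    and Lip: "\<And>x y. x \<in> K \<Longrightarrow> dist x y < \<delta> \<Longrightarrow> dist (f x) (f y) \<le> L * dist x y"
    by (rule unif_lip[OF assms Kne]) blast
  define \<epsilon> where "\<epsilon> = \<delta> / 4"
  have epos: "\<epsilon> > 0" using dpos \<epsilon>_def by simp
  have cov: "K \<subseteq> (\<Union>x\<in>K. ball x \<epsilon>)" using epos by force
  obtain C where C: "C \<subseteq> K" "finite C" "K \<subseteq> (\<Union>c\<in>C. ball c \<epsilon>)"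
    by (rule compactE_image[OF assms(2) _ cov]) auto
  have indC: "\<forall>S\<subseteq>C. finite S \<and> independent S \<longrightarrow> card S \<le> card C"
    using C(2) by (auto intro: card_mono)
  obtain BC where BC: "BC \<subseteq> C" "finite BC" "independent BC" "card BC \<le> card C" "C \<subseteq> span BC"
    by (rule max_indep_finite[OF indC])
  show ?thesis
  proof (intro exI[of _ "card C"] exI[of _ "2 * L"] conjI allI impI)
    show "0 \<le> 2 * L" using L0 by simp
    fix n assume n: "card C \<le> n" and ex: "\<exists>E::'a set. n_dim_subspace E n"
    then obtain E0 :: "'a set" where E0: "n_dim_subspace E0 n" by blast
    have cBn: "card BC \<le> n" using BC(4) n by simp
    obtain E1 where E1: "n_dim_subspace E1 n" "BC \<subseteq> E1"
      using extend_ndim[OF BC(2,3) cBn E0] by blast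
    have "span BC \<subseteq> E1" using E1 unfolding n_dim_subspace_def by (intro span_minimal) auto
    then have CE1: "C \<subseteq> E1" using BC(5) by blast
    have "(SUP u\<in>K. infdist u E1) \<le> \<epsilon>"
    proof (rule cSUP_least[OF Kne])
      fix u assume "u \<in> K"
      then obtain c where c: "c \<in> C" "dist c u < \<epsilon>" using C(3) by auto
      have "infdist u E1 \<le> dist u c" using c(1) CE1 by (intro infdist_le) auto
      then show "infdist u E1 \<le> \<epsilon>" using c(2) by (simp add: dist_commute)
    qed
    then have wle: "kolmogorov_width n K \<le> \<epsilon>" using width_le[OF assms(2) Kne E1(1)] by linarith
    have w0: "0 \<le> kolmogorov_width n K" by (rule width_nonneg[OF assms(2) Kne E0])
    show "\<exists>E. n_dim_subspace E n \<and> (SUP x\<in>K. norm (f x - f (orth_proj E x))) \<le> 2 * L * kolmogorov_width n K"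
    proof (cases "kolmogorov_width n K = 0")
      case True
      have ind: "\<forall>S\<subseteq>K. finite S \<and> independent S \<longrightarrow> card S \<le> n"
        by (rule width_zero_dim[OF assms(2) True E0])
      obtain BK where BK: "BK \<subseteq> K" "finite BK" "independent BK" "card BK \<le> n" "K \<subseteq> span BK"
        by (rule max_indep_finite[OF ind])
      obtain E where E: "n_dim_subspace E n" "BK \<subseteq> E"
        using extend_ndim[OF BK(2,3,4) E0] by blast
      obtain BE where BE: "finite BE" "independent BE" "card BE = n" "E = span BE"
        by (rule ndim_span[OF E(1)])
      have "span BK \<subseteq> E" using E unfolding n_dim_subspace_def by (intro span_minimal) auto
      then have KE: "K \<subseteq> span BE" using BK(5) BE(4) by blast
      have "(SUP x\<in>K. norm (f x - f (orth_proj E x))) \<le> 0"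
      proof (rule cSUP_least[OF Kne])
        fix x assume "x \<in> K"
        then have "orth_proj E x = x" using KE BE(4) proj_id[OF BE(1)] by auto
        then show "norm (f x - f (orth_proj E x)) \<le> 0" by simp
      qed
      then show ?thesis using E(1) True by auto
    next
      case False
      then have wpos: "0 < kolmogorov_width n K" using w0 by simp
      obtain E where E: "n_dim_subspace E n" "(SUP u\<in>K. infdist u E) < 2 * kolmogorov_width n K"
        using width_less[OF E0, of K "2 * kolmogorov_width n K"] wpos by auto
      obtain BE where BE: "finite BE" "independent BE" "card BE = n" "E = span BE"
        by (rule ndim_span[OF E(1)])
      have "(SUP x\<in>K. norm (f x - f (orth_proj E x))) \<le> 2 * L * kolmogorov_width n K"
      proof (rule cSUP_least[OF Kne])
        fix x assume x: "x \<in> K"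
        have id: "infdist x E = norm (x - orth_proj E x)" using proj_infdist[OF BE(1)] BE(4) by simp
        have "infdist x E \<le> (SUP u\<in>K. infdist u E)" by (rule cSUP_upper[OF x bdd_infdist[OF assms(2)]])
        then have lt: "norm (x - orth_proj E x) < 2 * kolmogorov_width n K" using E(2) id by linarith
        have "dist x (orth_proj E x) = norm (x - orth_proj E x)" by (simp add: dist_norm)
        then have "dist x (orth_proj E x) < \<delta>" using lt wle \<epsilon>_def dpos by linarith
        then have "dist (f x) (f (orth_proj E x)) \<le> L * dist x (orth_proj E x)" using Lip x by blast
        also have "\<dots> \<le> L * (2 * kolmogorov_width n K)"
          using L0 lt by (intro mult_left_mono) (auto simp: dist_norm)
        finally show "norm (f x - f (orth_proj E x)) \<le> 2 * L * kolmogorov_width n K"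
          by (simp add: dist_norm mult.assoc)
      qed
      then show ?thesis using E(1) by blast
    qed
  qed
qed

end
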